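(* Let $\mathbf{B}_1=\{S_1,C_3,S_5,S_7,\dots\}$ and $\mathbf{B}_2=\{S_1,S_3,S_5,S_7,\dots\}$. For each $n\ge1$, both $\mathcal{Y}(\mathbf{B}_1)$ and $\mathcal{Y}(\mathbf{B}_2)$ are bases of $\Gamma^n$.
   Context: For a finite simple graph $G$, $X_G$ is its chromatic symmetric function (the sum over proper colorings $\kappa$ of $\prod_v x_{\kappa(v)}$), $\omega$ is the involution on symmetric functions with $\omega(p_r)=(-1)^{r-1}p_r$, and $Y_G=(X_G+\omega(X_G))/2$. $\Gamma=\mathbb{Q}[p_1,p_3,\dots]$ and $\Gamma^n$ is its homogeneous degree-$n$ component. $OP(n)$ is the set of partitions of $n$ into odd parts. For a set $\mathbf{B}=\{G_1,G_3,G_5,\dots\}$ of graphs with $G_k$ having $k$ vertices, $\mathcal{Y}(\mathbf{B})=\{\prod_i Y_{G_{\lambda_i}} : \lambda=(\lambda_1,\lambda_2,\dots)\in OP(n)\}$. $C_3$ is the 3-cycle and $S_n$ the star tree on $n$ vertices (one internal vertex, $n-1$ leaves). *)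

theory Defs
  imports Complex_Main "HOL-Library.Multiset" "HOL-Library.Poly_Mapping" "HOL-Library.FuncSet"
begin

text \<open>Formal power series in the variables x_0, x_1, x_2, ... with rational
coefficients, represented by their coefficient function on exponent vectors
(finitely supported maps nat to nat).\<close>

type_synonym mono = "nat \<Rightarrow>\<^sub>0 nat"
type_synonym sf = "mono \<Rightarrow> rat"

definition sf_one :: sf where
  "sf_one = (\<lambda>a. if a = 0 then 1 else 0)"

definition sf_mult :: "sf \<Rightarrow> sf \<Rightarrow> sf" where
  "sf_mult f g = (\<lambda>a. \<Sum>(b, c) \<in> {(b, c). b + c = a}. f b * g c)"

definition sf_prod_list :: "sf list \<Rightarrow> sf" where
  "sf_prod_list fs = foldr sf_mult fs sf_one"

definition lincomb :: "('i \<Rightarrow> rat) \<Rightarrow> ('i \<Rightarrow> sf) \<Rightarrow> 'i set \<Rightarrow> sf" where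
  "lincomb c b I = (\<lambda>a. \<Sum>i\<in>I. c i * b i a)"

definition psum :: "nat \<Rightarrow> sf" where
  "psum r = (\<lambda>a. if (\<exists>i. a = Poly_Mapping.single i r) then 1 else 0)"

definition is_partition :: "nat multiset \<Rightarrow> bool" where
  "is_partition la \<longleftrightarrow> 0 \<notin># la"

definition psum_part :: "nat multiset \<Rightarrow> sf" where
  "psum_part la = sf_prod_list (map psum (sorted_list_of_multiset la))"

definition eps_part :: "nat multiset \<Rightarrow> rat" where
  "eps_part la = (\<Prod>r\<in>#la. (-1) ^ (r - 1))"

text \<open>The involution omega, defined through the power-sum expansion:
omega(p_r) = (-1)^(r-1) p_r, extended multiplicatively and linearly.\<close>
definition omega :: "sf \<Rightarrow> sf" where
  "omega f = (THE g. \<exists>S c. finite S \<and> (\<forall>la\<in>S. is_partition la) \<and>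
      f = lincomb c psum_part S \<and> g = lincomb (\<lambda>la. c la * eps_part la) psum_part S)"

type_synonym graph = "nat set \<times> (nat \<Rightarrow> nat \<Rightarrow> bool)"

definition proper_colouring :: "graph \<Rightarrow> (nat \<Rightarrow> nat) \<Rightarrow> bool" where
  "proper_colouring G k \<longleftrightarrow>
     (\<forall>u\<in>fst G. \<forall>v\<in>fst G. snd G u v \<longrightarrow> k u \<noteq> k v)"

definition chrom :: "graph \<Rightarrow> sf" where
  "chrom G = (\<lambda>a. of_nat (card {k \<in> fst G \<rightarrow>\<^sub>E (UNIV :: nat set).
       proper_colouring G k \<and> (\<forall>i. card {v \<in> fst G. k v = i} = Poly_Mapping.lookup a i)}))"

definition Ysf :: "graph \<Rightarrow> sf" where
  "Ysf G = (\<lambda>a. (chrom G a + omega (chrom G) a) / 2)"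

definition OP :: "nat \<Rightarrow> nat multiset set" where
  "OP n = {la. is_partition la \<and> (\<forall>r\<in>#la. odd r) \<and> sum_mset la = n}"

definition Gamma :: "nat \<Rightarrow> sf set" where
  "Gamma n = {f. \<exists>c. f = lincomb c psum_part (OP n)}"

definition Yfam :: "(nat \<Rightarrow> graph) \<Rightarrow> nat multiset \<Rightarrow> sf" where
  "Yfam B la = sf_prod_list (map (\<lambda>r. Ysf (B r)) (sorted_list_of_multiset la))"

definition is_basis_of_Gamma :: "nat \<Rightarrow> (nat multiset \<Rightarrow> sf) \<Rightarrow> bool" where
  "is_basis_of_Gamma n b \<longleftrightarrow>
     (\<forall>c. lincomb c b (OP n) = (\<lambda>_. 0) \<longrightarrow> (\<forall>la\<in>OP n. c la = 0)) \<and>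
     {f. \<exists>c. f = lincomb c b (OP n)} = Gamma n"

definition star :: "nat \<Rightarrow> graph" where
  "star k = ({0..<k}, \<lambda>u v. (u = 0 \<and> v \<noteq> 0) \<or> (v = 0 \<and> u \<noteq> 0))"

definition cycle3 :: graph where
  "cycle3 = ({0, 1, 2}, \<lambda>u v. u \<noteq> v)"

definition B1 :: "nat \<Rightarrow> graph" where
  "B1 k = (if k = 3 then cycle3 else star k)"

definition B2 :: "nat \<Rightarrow> graph" where
  "B2 k = star k"

end

theory Submission imports Defs begin

abbreviation lk :: "mono \<Rightarrow> nat \<Rightarrow> nat" where "lk \<equiv> Poly_Mapping.lookup"
abbreviation sg :: "nat \<Rightarrow> nat \<Rightarrow> mono" where "sg \<equiv> Poly_Mapping.single"
abbreviation ks :: "mono \<Rightarrow> nat set" where "ks \<equiv> Poly_Mapping.keys"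

lemma finite_bounded_mono: "finite {b::mono. \<forall>i. lk b i \<le> lk (a::mono) i}"
proof -
  let ?B = "{b::mono. \<forall>i. lk b i \<le> lk a i}"
  have "inj_on (\<lambda>b. restrict (lk b) (ks a)) ?B"
  proof (rule inj_onI)
    fix x y :: mono assume x: "x \<in> ?B" and y: "y \<in> ?B" and eq: "restrict (lk x) (ks a) = restrict (lk y) (ks a)"
    show "x = y"
    proof (rule poly_mapping_eqI)
      fix k :: nat show "lk x k = lk y k"
      proof (cases "k \<in> ks a")
        case True then show ?thesis using eq by (metis restrict_apply')
      next
        case False then have "lk a k = 0" by (simp add: in_keys_iff)
        then show ?thesis using x y by (metis (mono_tags, lifting) le_zero_eq mem_Collect_eq)
      qed
    qed
  qed
  moreover have "(\<lambda>b. restrict (lk b) (ks a)) ` ?B \<subseteq> PiE (ks a) (\<lambda>i. {0..lk a i})"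
    by auto
  moreover have "finite (PiE (ks a) (\<lambda>i. {0..lk a i}))"
    by (intro finite_PiE) auto
  ultimately show ?thesis by (meson finite_imageD finite_subset)
qed

lemma finite_D: "finite {(b, c). b + c = (a::mono)}"
proof -
  let ?D = "{(b, c). b + c = (a::mono)}"
  have "inj_on fst ?D" by (rule inj_onI) auto
  moreover have "fst ` ?D \<subseteq> {b::mono. \<forall>i. lk b i \<le> lk a i}"
  proof
    fix b assume "b \<in> fst ` ?D"
    then obtain c where "b + c = a" by auto
    then show "b \<in> {b::mono. \<forall>i. lk b i \<le> lk a i}" by (auto simp: lookup_add)
  qed
  ultimately show ?thesis using finite_bounded_mono
    by (meson finite_imageD finite_subset)
qed

definition wsum :: "nat set \<Rightarrow> (nat \<Rightarrow> nat) \<Rightarrow> (nat \<Rightarrow> nat) \<Rightarrow> mono" where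
  "wsum V w f = (\<Sum>u\<in>V. sg (f u) (w u))"

definition Sset :: "nat set \<Rightarrow> (nat \<Rightarrow> nat) \<Rightarrow> mono \<Rightarrow> (nat \<Rightarrow> nat) set" where
  "Sset V w a = {f \<in> V \<rightarrow>\<^sub>E UNIV. wsum V w f = a}"

definition W :: "nat set \<Rightarrow> (nat \<Rightarrow> nat) \<Rightarrow> sf" where
  "W V w = (\<lambda>a. of_nat (card (Sset V w a)))"

lemma lk_wsum: "lk (wsum V w f) j = (\<Sum>u\<in>V. if f u = j then w u else 0)"
  unfolding wsum_def lookup_sum by (simp add: lookup_single when_def)

lemma wsum_cong: "(\<And>u. u \<in> V \<Longrightarrow> f u = g u) \<Longrightarrow> (\<And>u. u \<in> V \<Longrightarrow> w u = w' u) \<Longrightarrow> wsum V w f = wsum V w' g"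
  unfolding wsum_def by (rule sum.cong) auto

lemma Sset_sub:
  assumes "finite V" "\<forall>u\<in>V. w u > 0"
  shows "Sset V w a \<subseteq> V \<rightarrow>\<^sub>E ks a"
proof
  fix f assume f: "f \<in> Sset V w a"
  have "f u \<in> ks a" if u: "u \<in> V" for u
  proof -
    have "w u \<le> (\<Sum>u'\<in>V. if f u' = f u then w u' else 0)"
      using assms u by (intro member_le_sum[of u V "\<lambda>u'. if f u' = f u then w u' else 0", simplified]) auto
    also have "\<dots> = lk a (f u)" using f lk_wsum[of V w f "f u"] by (simp add: Sset_def)
    finally have "w u \<le> lk a (f u)" .
    moreover have "w u > 0" using assms u by auto
    ultimately show ?thesis by (simp add: in_keys_iff)
  qed
  then show "f \<in> V \<rightarrow>\<^sub>E ks a" using f by (auto simp: Sset_def)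
qed

lemma finite_Sset:
  assumes "finite V" "\<forall>u\<in>V. w u > 0"
  shows "finite (Sset V w a)"
  using Sset_sub[OF assms] by (rule finite_subset) (intro finite_PiE, auto simp: assms)

lemma W_empty: "W {} w = sf_one"
proof
  fix a
  have "Sset {} w a = (if a = 0 then {\<lambda>_. undefined} else {})"
    by (auto simp: Sset_def wsum_def)
  then show "W {} w a = sf_one a" by (simp add: W_def sf_one_def)
qed

lemma W_single:
  assumes "w v > 0"
  shows "W {v} w = psum (w v)"
proof
  fix a
  show "W {v} w a = psum (w v) a"
  proof (cases "\<exists>i. a = sg i (w v)")
    case True
    then obtain i where i: "a = sg i (w v)" by auto
    have "Sset {v} w a = {(\<lambda>_. undefined)(v := i)}"
    proof (intro equalityI subsetI)
      fix f assume f: "f \<in> Sset {v} w a"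
      then have "sg (f v) (w v) = sg i (w v)" by (simp add: Sset_def wsum_def i)
      then have "f v = i" using assms
        by (metis lookup_single_eq lookup_single_not_eq less_not_refl)
      then show "f \<in> {(\<lambda>_. undefined)(v := i)}" using f by (auto simp: Sset_def PiE_def extensional_def)
    next
      fix f assume "f \<in> {(\<lambda>_. undefined)(v := i)}"
      moreover have "(\<lambda>_. undefined)(v := i) \<in> {v} \<rightarrow>\<^sub>E UNIV" by (simp add: PiE_def extensional_def)
      ultimately show "f \<in> Sset {v} w a" by (simp add: Sset_def wsum_def i)
    qed
    then show ?thesis using True by (simp add: W_def psum_def)
  next
    case False
    then have "Sset {v} w a = {}" by (auto simp: Sset_def wsum_def)
    then show ?thesis using False by (simp add: W_def psum_def)
  qed
qed

lemma W_union:
  assumes fin: "finite V1" "finite V2" and disj: "V1 \<inter> V2 = {}"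
    and pos: "\<forall>u\<in>V1 \<union> V2. w u > 0"
  shows "W (V1 \<union> V2) w = sf_mult (W V1 w) (W V2 w)"
proof
  fix a
  let ?D = "{(b, c). b + c = (a::mono)}"
  let ?T = "SIGMA p:?D. Sset V1 w (fst p) \<times> Sset V2 w (snd p)"
  define \<phi> where "\<phi> f = ((wsum V1 w f, wsum V2 w f), (restrict f V1, restrict f V2))" for f :: "nat \<Rightarrow> nat"
  define \<psi> where "\<psi> q = (\<lambda>u. if u \<in> V1 then fst (snd q) u else if u \<in> V2 then snd (snd q) u else undefined)"
    for q :: "(mono \<times> mono) \<times> (nat \<Rightarrow> nat) \<times> (nat \<Rightarrow> nat)"
  have wsU: "wsum (V1 \<union> V2) w f = wsum V1 w f + wsum V2 w f" for f
    unfolding wsum_def using fin disj by (rule sum.union_disjoint)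
  have bij: "bij_betw \<phi> (Sset (V1 \<union> V2) w a) ?T"
  proof (rule bij_betw_byWitness[where f'=\<psi>])
    show "\<forall>f\<in>Sset (V1 \<union> V2) w a. \<psi> (\<phi> f) = f"
      by (auto simp: \<phi>_def \<psi>_def Sset_def PiE_def extensional_def fun_eq_iff)
    show "\<forall>q\<in>?T. \<phi> (\<psi> q) = q"
    proof
      fix q assume q: "q \<in> ?T"
      then obtain b c g h where qq: "q = ((b, c), (g, h))" and bc: "b + c = a"
        and g: "g \<in> Sset V1 w b" and h: "h \<in> Sset V2 w c" by auto
      have "wsum V1 w (\<psi> q) = wsum V1 w g" by (rule wsum_cong) (auto simp: \<psi>_def qq)
      moreover have "wsum V2 w (\<psi> q) = wsum V2 w h" using disj by (intro wsum_cong) (auto simp: \<psi>_def qq)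
      moreover have "restrict (\<psi> q) V1 = g" using g
        by (auto simp: \<psi>_def qq Sset_def PiE_def extensional_def fun_eq_iff)
      moreover have "restrict (\<psi> q) V2 = h" using h disj
        by (auto simp: \<psi>_def qq Sset_def PiE_def extensional_def fun_eq_iff)
      ultimately show "\<phi> (\<psi> q) = q" using g h by (simp add: \<phi>_def qq Sset_def)
    qed
    show "\<phi> ` Sset (V1 \<union> V2) w a \<subseteq> ?T"
    proof
      fix x assume "x \<in> \<phi> ` Sset (V1 \<union> V2) w a"
      then obtain f where f: "f \<in> Sset (V1 \<union> V2) w a" and x: "x = \<phi> f" by auto
      have "wsum V1 w (restrict f V1) = wsum V1 w f" by (rule wsum_cong) auto
      moreover have "wsum V2 w (restrict f V2) = wsum V2 w f" by (rule wsum_cong) auto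
      ultimately show "x \<in> ?T" using f wsU[of f] by (auto simp: x \<phi>_def Sset_def)
    qed
    show "\<psi> ` ?T \<subseteq> Sset (V1 \<union> V2) w a"
    proof
      fix x assume "x \<in> \<psi> ` ?T"
      then obtain q where q: "q \<in> ?T" and x: "x = \<psi> q" by auto
      then obtain b c g h where qq: "q = ((b, c), (g, h))" and bc: "b + c = a"
        and g: "g \<in> Sset V1 w b" and h: "h \<in> Sset V2 w c" by auto
      have "wsum V1 w (\<psi> q) = wsum V1 w g" by (rule wsum_cong) (auto simp: \<psi>_def qq)
      moreover have "wsum V2 w (\<psi> q) = wsum V2 w h" using disj by (intro wsum_cong) (auto simp: \<psi>_def qq)
      moreover have "\<psi> q \<in> (V1 \<union> V2) \<rightarrow>\<^sub>E UNIV" by (auto simp: \<psi>_def PiE_def extensional_def split: if_split_asm)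
      ultimately show "x \<in> Sset (V1 \<union> V2) w a" using g h bc wsU[of "\<psi> q"]
        by (simp add: x Sset_def)
    qed
  qed
  have fin1: "finite (Sset V1 w b)" for b using pos fin by (intro finite_Sset) auto
  have fin2: "finite (Sset V2 w b)" for b using pos fin by (intro finite_Sset) auto
  have "card (Sset (V1 \<union> V2) w a) = card ?T" using bij by (rule bij_betw_same_card)
  also have "\<dots> = (\<Sum>p\<in>?D. card (Sset V1 w (fst p) \<times> Sset V2 w (snd p)))"
    using finite_D fin1 fin2 by (intro card_SigmaI) auto
  also have "\<dots> = (\<Sum>p\<in>?D. card (Sset V1 w (fst p)) * card (Sset V2 w (snd p)))"
    by (simp add: card_cartesian_product)
  finally have "W (V1 \<union> V2) w a = (\<Sum>p\<in>?D. of_nat (card (Sset V1 w (fst p))) * of_nat (card (Sset V2 w (snd p))))"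
    by (simp add: W_def)
  also have "\<dots> = sf_mult (W V1 w) (W V2 w) a"
    unfolding sf_mult_def W_def by (rule sum.cong) auto
  finally show "W (V1 \<union> V2) w a = sf_mult (W V1 w) (W V2 w) a" .
qed

lemma W_cong: "(\<And>u. u \<in> V \<Longrightarrow> w u = w' u) \<Longrightarrow> W V w = W V w'"
proof -
  assume h: "\<And>u. u \<in> V \<Longrightarrow> w u = w' u"
  have "Sset V w a = Sset V w' a" for a
    unfolding Sset_def using wsum_cong[of V _ _ w w', OF _ h] by auto
  then show ?thesis by (simp add: W_def)
qed

lemma W_insert:
  assumes "finite V" "v \<notin> V" "\<forall>u\<in>insert v V. w u > 0"
  shows "W (insert v V) w = sf_mult (psum (w v)) (W V w)"
proof -
  have "W (insert v V) w = W ({v} \<union> V) w" by simp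
  also have "\<dots> = sf_mult (W {v} w) (W V w)" using assms by (intro W_union) auto
  also have "W {v} w = psum (w v)" using assms by (intro W_single) auto
  finally show ?thesis .
qed

lemma W_mset:
  assumes "finite V" "finite V'" "\<forall>u\<in>V. w u > 0" "\<forall>u\<in>V'. w' u > 0"
    "image_mset w (mset_set V) = image_mset w' (mset_set V')"
  shows "W V w = W V' w'"
  using assms
proof (induction V arbitrary: V' rule: finite_induct)
  case empty
  then have "mset_set V' = {#}" by simp
  then have "V' = {}" using empty by (simp add: mset_set_empty_iff)
  then show ?case by (simp add: W_empty)
next
  case (insert v V)
  have "w v \<in># image_mset w (mset_set (insert v V))" using insert(1,2) by simp
  then have "w v \<in># image_mset w' (mset_set V')" using insert.prems(4) by simp
  then obtain v' where v': "v' \<in> V'" "w' v' = w v" using insert.prems(1) by auto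
  have "image_mset w' (mset_set V') = add_mset (w' v') (image_mset w' (mset_set (V' - {v'})))"
    using v' insert.prems by (simp add: mset_set.remove)
  moreover have "image_mset w (mset_set (insert v V)) = add_mset (w v) (image_mset w (mset_set V))"
    using insert by simp
  ultimately have "image_mset w (mset_set V) = image_mset w' (mset_set (V' - {v'}))"
    using insert.prems v' by simp
  then have IH: "W V w = W (V' - {v'}) w'" using insert by (intro insert.IH) auto
  have "W (insert v V) w = sf_mult (psum (w v)) (W V w)" using insert by (intro W_insert) auto
  also have "\<dots> = sf_mult (psum (w' v')) (W (V' - {v'}) w')" using IH v' by simp
  also have "\<dots> = W (insert v' (V' - {v'})) w'" using insert.prems v' by (intro W_insert[symmetric]) auto
  also have "insert v' (V' - {v'}) = V'" using v' by auto
  finally show ?case .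
qed

lemma image_nth_mset: "image_mset (nth xs) (mset_set {..<length xs}) = mset xs"
proof -
  have "mset xs = mset (map (nth xs) [0..<length xs])" by (simp add: map_nth)
  also have "\<dots> = image_mset (nth xs) (mset [0..<length xs])" by simp
  also have "mset [0..<length xs] = mset_set {..<length xs}" by (simp add: mset_upt lessThan_atLeast0)
  finally show ?thesis by simp
qed

lemma prod_list_W:
  assumes "\<forall>x\<in>set xs. x > 0"
  shows "sf_prod_list (map psum xs) = W {..<length xs} (nth xs)"
  using assms
proof (induction xs)
  case Nil
  then show ?case by (simp add: sf_prod_list_def W_empty)
next
  case (Cons x xs)
  let ?n = "length xs"
  have e1: "{..<length (x # xs)} = insert 0 {1..<Suc ?n}" by auto
  have pos: "\<forall>u\<in>insert 0 {1..<Suc ?n}. (x # xs) ! u > 0"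
    using Cons.prems by (auto simp: nth_Cons split: nat.splits)
  have "W {..<length (x # xs)} (nth (x # xs)) = sf_mult (psum ((x#xs) ! 0)) (W {1..<Suc ?n} (nth (x # xs)))"
    unfolding e1 using pos by (intro W_insert) auto
  moreover have "W {1..<Suc ?n} (nth (x # xs)) = W {..<?n} (nth xs)"
  proof (rule W_mset)
    have "map (nth (x # xs)) [1..<Suc ?n] = xs"
      by (simp add: map_Suc_upt[symmetric] comp_def map_nth del: upt_Suc)
    then have "mset xs = image_mset (nth (x # xs)) (mset [1..<Suc ?n])" by (metis mset_map)
    also have "mset [1..<Suc ?n] = mset_set {1..<Suc ?n}" by (rule mset_upt)
    finally show "image_mset (nth (x # xs)) (mset_set {1..<Suc ?n}) = image_mset (nth xs) (mset_set {..<?n})"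
      by (simp add: image_nth_mset)
  qed (use pos Cons.prems in \<open>auto simp: in_set_conv_nth\<close>)
  ultimately show ?case using Cons by (simp add: sf_prod_list_def)
qed

lemma W_psum_part:
  assumes "finite V" "\<forall>u\<in>V. w u > 0"
  shows "W V w = psum_part (image_mset w (mset_set V))"
proof -
  let ?M = "image_mset w (mset_set V)"
  let ?xs = "sorted_list_of_multiset ?M"
  have pos: "\<forall>x\<in>set ?xs. x > 0" using assms by auto
  have "psum_part ?M = W {..<length ?xs} (nth ?xs)"
    unfolding psum_part_def using pos by (rule prod_list_W)
  also have "\<dots> = W V w"
  proof (rule W_mset)
    show "\<forall>u\<in>{..<length ?xs}. ?xs ! u > 0" using pos by (auto simp del: set_sorted_list_of_multiset)
  qed (use assms in \<open>auto simp: image_nth_mset\<close>)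
  finally show ?thesis by simp
qed

lemma partition_pos: "is_partition la \<Longrightarrow> x \<in># la \<Longrightarrow> x > 0"
  by (auto simp: is_partition_def intro!: gr0I)

lemma len_sl: "length (sorted_list_of_multiset la) = size la"
  by (metis mset_sorted_list_of_multiset size_mset)

lemma nth_sl_pos: "is_partition la \<Longrightarrow> u < length (sorted_list_of_multiset la) \<Longrightarrow> 0 < sorted_list_of_multiset la ! u"
  by (metis nth_mem set_sorted_list_of_multiset partition_pos)

lemma psum_part_W:
  assumes "is_partition la"
  shows "psum_part la = W {..<size la} (nth (sorted_list_of_multiset la))"
proof -
  let ?xs = "sorted_list_of_multiset la"
  have pos: "\<forall>x\<in>set ?xs. x > 0" using assms by (auto simp: is_partition_def intro!: gr0I)
  show ?thesis unfolding psum_part_def using prod_list_W[OF pos] by (simp add: len_sl)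
qed


lemma psum_part_add:
  assumes "is_partition mu" "is_partition nu"
  shows "psum_part (mu + nu) = sf_mult (psum_part mu) (psum_part nu)"
proof -
  define xs where "xs = sorted_list_of_multiset mu"
  define ys where "ys = sorted_list_of_multiset nu"
  define m where "m = length xs"
  define k where "k = length ys"
  define w where "w u = (if u < m then xs ! u else ys ! (u - m))" for u
  have pos1: "\<forall>u\<in>{..<m}. w u > 0" using assms(1)
    by (auto simp: w_def m_def xs_def nth_sl_pos)
  have pos2: "\<forall>u\<in>{m..<m+k}. w u > 0" using assms(2)
    by (auto simp: w_def k_def ys_def nth_sl_pos)
  have i1: "image_mset w (mset_set {..<m}) = mu"
  proof -
    have "image_mset w (mset_set {..<m}) = image_mset (nth xs) (mset_set {..<m})"
      by (rule image_mset_cong) (auto simp: w_def)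
    also have "\<dots> = mu" unfolding m_def image_nth_mset xs_def by simp
    finally show ?thesis .
  qed
  have i2: "image_mset w (mset_set {m..<m+k}) = nu"
  proof -
    have "map w [m..<m+k] = ys" by (rule nth_equalityI) (auto simp: w_def k_def)
    then have "mset ys = image_mset w (mset [m..<m+k])" by (metis mset_map)
    also have "mset [m..<m+k] = mset_set {m..<m+k}" by (rule mset_upt)
    finally show ?thesis by (simp add: ys_def)
  qed
  have "psum_part (mu + nu) = psum_part (image_mset w (mset_set ({..<m} \<union> {m..<m+k})))"
    by (simp add: mset_set_Union i1 i2 ivl_disj_int(2) image_mset_union)
  also have "\<dots> = W ({..<m} \<union> {m..<m+k}) w"
    using pos1 pos2 by (intro W_psum_part[symmetric]) auto
  also have "\<dots> = sf_mult (W {..<m} w) (W {m..<m+k} w)"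
    using pos1 pos2 by (intro W_union) auto
  also have "W {..<m} w = psum_part mu" using pos1 i1 by (simp add: W_psum_part)
  also have "W {m..<m+k} w = psum_part nu" using pos2 i2 by (simp add: W_psum_part)
  finally show ?thesis .
qed

lemma image_sl: "image_mset (nth (sorted_list_of_multiset M)) (mset_set {..<size M}) = M"
  by (metis image_nth_mset len_sl mset_sorted_list_of_multiset)

definition mono_of :: "nat multiset \<Rightarrow> mono" where
  "mono_of mu = wsum {..<size mu} (nth (sorted_list_of_multiset mu)) id"

lemma lk_mono_of: "lk (mono_of mu) j = (if j < size mu then sorted_list_of_multiset mu ! j else 0)"
proof -
  have "lk (mono_of mu) j = (\<Sum>u\<in>{..<size mu}. if u = j then sorted_list_of_multiset mu ! u else 0)"
    unfolding mono_of_def lk_wsum by simp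
  also have "\<dots> = (if j < size mu then sorted_list_of_multiset mu ! j else 0)"
    by (simp add: sum.delta')
  finally show ?thesis .
qed

lemma psum_part_self:
  assumes "is_partition mu"
  shows "psum_part mu (mono_of mu) \<noteq> 0"
proof -
  let ?xs = "sorted_list_of_multiset mu"
  have "restrict id {..<size mu} \<in> Sset {..<size mu} (nth ?xs) (mono_of mu)"
    unfolding Sset_def mono_of_def by (auto intro: wsum_cong)
  moreover have "finite (Sset {..<size mu} (nth ?xs) (mono_of mu))"
    using assms by (intro finite_Sset) (auto simp: nth_sl_pos len_sl)
  ultimately have "card (Sset {..<size mu} (nth ?xs) (mono_of mu)) \<noteq> 0"
    by (metis card_0_eq empty_iff)
  then show ?thesis using psum_part_W[OF assms] by (simp add: W_def)
qed

lemma psum_part_coeff: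
  assumes mu: "is_partition mu" and nu: "is_partition nu" and sz: "size nu \<le> size mu"
    and nz: "psum_part nu (mono_of mu) \<noteq> 0"
  shows "nu = mu"
proof -
  define xs where "xs = sorted_list_of_multiset mu"
  define ys where "ys = sorted_list_of_multiset nu"
  define m where "m = size mu"
  define k where "k = size nu"
  have "card (Sset {..<k} (nth ys) (mono_of mu)) \<noteq> 0"
    using nz psum_part_W[OF nu] by (simp add: W_def k_def ys_def)
  then have "Sset {..<k} (nth ys) (mono_of mu) \<noteq> {}" by auto
  then obtain f where f: "f \<in> Sset {..<k} (nth ys) (mono_of mu)" by blast
  have lkf: "lk (mono_of mu) j = (\<Sum>u\<in>{..<k}. if f u = j then ys ! u else 0)" for j
    using f lk_wsum[of "{..<k}" "nth ys" f j] by (simp add: Sset_def)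
  have cover: "{..<m} \<subseteq> f ` {..<k}"
  proof
    fix j assume j: "j \<in> {..<m}"
    then have "lk (mono_of mu) j > 0" using mu by (simp add: lk_mono_of m_def nth_sl_pos len_sl)
    then have "(\<Sum>u\<in>{..<k}. if f u = j then ys ! u else 0) \<noteq> 0" unfolding lkf by (rule gr_implies_not0)
    have "\<exists>u\<in>{..<k}. f u = j"
    proof (rule ccontr)
      assume "\<not> (\<exists>u\<in>{..<k}. f u = j)"
      then have "(\<Sum>u\<in>{..<k}. if f u = j then ys ! u else 0) = 0" by (intro sum.neutral) auto
      with \<open>(\<Sum>u\<in>{..<k}. if f u = j then ys ! u else 0) \<noteq> 0\<close> show False by simp
    qed
    then show "j \<in> f ` {..<k}" by auto
  qed
  have "m \<le> card (f ` {..<k})" using card_mono[OF _ cover] by simp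
  also have "\<dots> \<le> k" using card_image_le[of "{..<k}" f] by simp
  finally have mk: "m \<le> k" .
  then have km: "k = m" using sz by (simp add: k_def m_def)
  have cardf: "card (f ` {..<k}) = card {..<k}" using \<open>m \<le> card (f ` {..<k})\<close> card_image_le[of "{..<k}" f] km by simp
  then have inj: "inj_on f {..<k}" by (intro eq_card_imp_inj_on) auto
  have img: "f ` {..<k} = {..<m}"
    using card_subset_eq[of "f ` {..<k}" "{..<m}"] cover cardf km by simp
  have val: "ys ! u = xs ! (f u)" if u: "u < k" for u
  proof -
    have fu: "f u < m" using img u by auto
    have "lk (mono_of mu) (f u) = xs ! (f u)" using fu by (simp add: lk_mono_of m_def xs_def)
    moreover have "(\<Sum>u'\<in>{..<k}. if f u' = f u then ys ! u' else 0) = (\<Sum>u'\<in>{..<k}. if u' = u then ys ! u' else 0)"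
      using inj u by (intro sum.cong) (auto dest: inj_onD)
    moreover have "\<dots> = ys ! u" using u by (simp add: sum.delta')
    ultimately show ?thesis using lkf by simp
  qed
  have "nu = image_mset (nth ys) (mset_set {..<k})" by (simp add: ys_def k_def image_sl)
  also have "\<dots> = image_mset (\<lambda>u. xs ! (f u)) (mset_set {..<k})"
    by (rule image_mset_cong) (simp add: val)
  also have "\<dots> = image_mset (nth xs) (image_mset f (mset_set {..<k}))" by (simp add: image_mset.compositionality comp_def)
  also have "image_mset f (mset_set {..<k}) = mset_set {..<m}" using inj img by (simp add: image_mset_mset_set)
  also have "image_mset (nth xs) (mset_set {..<m}) = mu" by (simp add: xs_def m_def image_sl)
  finally show ?thesis .
qed

lemma psum_indep:
  assumes fin: "finite S" and parts: "\<forall>mu\<in>S. is_partition mu"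
    and z: "lincomb c psum_part S = (\<lambda>_. 0)"
  shows "\<forall>mu\<in>S. c mu = 0"
proof (rule ccontr)
  assume "\<not> (\<forall>mu\<in>S. c mu = 0)"
  then have ne: "{mu\<in>S. c mu \<noteq> 0} \<noteq> {}" by auto
  have fin': "finite {mu\<in>S. c mu \<noteq> 0}" using fin by auto
  define s where "s = Max (size ` {mu\<in>S. c mu \<noteq> 0})"
  have "s \<in> size ` {mu\<in>S. c mu \<noteq> 0}" unfolding s_def using fin' ne by (intro Max_in) auto
  then obtain mu0 where mu0: "mu0 \<in> {mu\<in>S. c mu \<noteq> 0}" and smu0: "size mu0 = s" by auto
  have mx: "\<forall>mu\<in>{mu\<in>S. c mu \<noteq> 0}. size mu \<le> size mu0"
    unfolding smu0 s_def using fin' by (simp add: Max_ge)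
  have "0 = lincomb c psum_part S (mono_of mu0)" using z by simp
  also have "\<dots> = (\<Sum>mu\<in>S. c mu * psum_part mu (mono_of mu0))" by (simp add: lincomb_def)
  also have "\<dots> = c mu0 * psum_part mu0 (mono_of mu0)"
  proof (rule sum.remove[OF fin, THEN trans])
    show "mu0 \<in> S" using mu0 by auto
    have "(\<Sum>mu\<in>S - {mu0}. c mu * psum_part mu (mono_of mu0)) = 0"
    proof (rule sum.neutral, rule ballI)
      fix mu assume mu: "mu \<in> S - {mu0}"
      show "c mu * psum_part mu (mono_of mu0) = 0"
      proof (cases "c mu = 0")
        case False
        then have "size mu \<le> size mu0" using mx mu by auto
        then have "psum_part mu (mono_of mu0) = 0" using psum_part_coeff[of mu0 mu] parts mu mu0 by auto
        then show ?thesis by simp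
      qed simp
    qed
    then show "c mu0 * psum_part mu0 (mono_of mu0) + (\<Sum>mu\<in>S - {mu0}. c mu * psum_part mu (mono_of mu0)) = c mu0 * psum_part mu0 (mono_of mu0)" by simp
  qed
  finally show False using mu0 psum_part_self[of mu0] parts by auto
qed

lemma lincomb_extend:
  assumes "finite U" "S \<subseteq> U"
  shows "lincomb c b S = lincomb (\<lambda>i. if i \<in> S then c i else 0) b U"
proof
  fix a
  have "lincomb (\<lambda>i. if i \<in> S then c i else 0) b U a = (\<Sum>i\<in>U. if i \<in> S then c i * b i a else 0)"
    unfolding lincomb_def by (rule sum.cong) auto
  also have "\<dots> = (\<Sum>i\<in>U \<inter> S. c i * b i a)" using assms by (simp add: sum.inter_restrict)
  also have "U \<inter> S = S" using assms by auto
  finally show "lincomb c b S a = lincomb (\<lambda>i. if i \<in> S then c i else 0) b U a"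
    by (simp add: lincomb_def)
qed

lemma lincomb_diff: "lincomb (\<lambda>i. c i - d i) b U = (\<lambda>a. lincomb c b U a - lincomb d b U a)"
  unfolding lincomb_def by (auto simp: algebra_simps sum_subtractf)

lemma lincomb_unique:
  assumes "finite S" "finite S'" "\<forall>mu\<in>S \<union> S'. is_partition mu"
    and eq: "lincomb c psum_part S = lincomb c' psum_part S'"
  shows "\<forall>mu\<in>S \<union> S'. (if mu \<in> S then c mu else 0) = (if mu \<in> S' then c' mu else 0)"
proof -
  let ?U = "S \<union> S'"
  have "lincomb (\<lambda>i. (if i \<in> S then c i else 0) - (if i \<in> S' then c' i else 0)) psum_part ?U = (\<lambda>_. 0)"
    unfolding lincomb_diff using assms
    by (simp add: lincomb_extend[of ?U S c, symmetric] lincomb_extend[of ?U S' c', symmetric])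
  from psum_indep[OF _ _ this] assms show ?thesis by auto
qed

lemma omega_lincomb:
  assumes fin: "finite S" and parts: "\<forall>mu\<in>S. is_partition mu"
  shows "omega (lincomb c psum_part S) = lincomb (\<lambda>la. c la * eps_part la) psum_part S"
  unfolding omega_def
proof (rule the_equality)
  show "\<exists>S' c'. finite S' \<and> (\<forall>la\<in>S'. is_partition la) \<and> lincomb c psum_part S = lincomb c' psum_part S' \<and>
      lincomb (\<lambda>la. c la * eps_part la) psum_part S = lincomb (\<lambda>la. c' la * eps_part la) psum_part S'"
    using assms by blast
next
  fix g assume "\<exists>S' c'. finite S' \<and> (\<forall>la\<in>S'. is_partition la) \<and> lincomb c psum_part S = lincomb c' psum_part S' \<and>
      g = lincomb (\<lambda>la. c' la * eps_part la) psum_part S'"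
  then obtain S' c' where S': "finite S'" "\<forall>la\<in>S'. is_partition la"
    and eq: "lincomb c psum_part S = lincomb c' psum_part S'"
    and g: "g = lincomb (\<lambda>la. c' la * eps_part la) psum_part S'" by blast
  let ?U = "S \<union> S'"
  have u: "\<forall>mu\<in>?U. (if mu \<in> S then c mu else 0) = (if mu \<in> S' then c' mu else 0)"
  proof -
    have "\<forall>mu\<in>?U. is_partition mu" using parts S'(2) by auto
    from lincomb_unique[OF fin S'(1) this eq] show ?thesis .
  qed
  have "g = lincomb (\<lambda>i. if i \<in> S' then c' i * eps_part i else 0) psum_part ?U"
    unfolding g using S' fin by (intro lincomb_extend) auto
  also have "\<dots> = lincomb (\<lambda>i. if i \<in> S then c i * eps_part i else 0) psum_part ?U"
    unfolding lincomb_def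
  proof (intro ext sum.cong refl)
    fix a i assume "i \<in> ?U"
    then have "(if i \<in> S then c i else 0) = (if i \<in> S' then c' i else 0)" using u by blast
    then show "(if i \<in> S' then c' i * eps_part i else 0) * psum_part i a = (if i \<in> S then c i * eps_part i else 0) * psum_part i a"
      by (auto split: if_splits)
  qed
  also have "\<dots> = lincomb (\<lambda>la. c la * eps_part la) psum_part S"
    using S' fin by (intro lincomb_extend[symmetric]) auto
  finally show "g = lincomb (\<lambda>la. c la * eps_part la) psum_part S" .
qed

lemma incl_excl:
  assumes "finite I" "finite X"
  shows "(of_nat (card {x\<in>X. \<forall>i\<in>I. \<not> P i x}) :: rat) =
    (\<Sum>J\<in>Pow I. (-1) ^ card J * of_nat (card {x\<in>X. \<forall>i\<in>J. P i x}))"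
  using assms
proof (induction I arbitrary: X rule: finite_induct)
  case empty
  then show ?case by simp
next
  case (insert i I)
  let ?X1 = "{x\<in>X. P i x}"
  have split: "card {x\<in>X. \<forall>j\<in>I. \<not> P j x} = card {x\<in>X. \<forall>j\<in>insert i I. \<not> P j x} + card {x\<in>?X1. \<forall>j\<in>I. \<not> P j x}"
  proof -
    have "{x\<in>X. \<forall>j\<in>I. \<not> P j x} = {x\<in>X. \<forall>j\<in>insert i I. \<not> P j x} \<union> {x\<in>?X1. \<forall>j\<in>I. \<not> P j x}" by auto
    moreover have "finite {x\<in>X. \<forall>j\<in>insert i I. \<not> P j x}" "finite {x\<in>?X1. \<forall>j\<in>I. \<not> P j x}"
      using insert.prems by auto
    ultimately show ?thesis by (subst card_Un_disjoint[symmetric]) auto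
  qed
  note ih1 = insert.IH[OF insert.prems]
  have ih2: "(of_nat (card {x\<in>?X1. \<forall>j\<in>I. \<not> P j x}) :: rat) = (\<Sum>J\<in>Pow I. (-1) ^ card J * of_nat (card {x\<in>?X1. \<forall>j\<in>J. P j x}))"
    using insert.prems by (intro insert.IH) auto
  have inj: "inj_on (insert i) (Pow I)" using insert.hyps by (intro inj_onI) (metis PowD insert_ident subsetD)
  have disj: "Pow I \<inter> insert i ` Pow I = {}" using insert.hyps by auto
  have "(\<Sum>J\<in>Pow (insert i I). (-1) ^ card J * (of_nat (card {x\<in>X. \<forall>j\<in>J. P j x}) :: rat)) =
      (\<Sum>J\<in>Pow I. (-1) ^ card J * of_nat (card {x\<in>X. \<forall>j\<in>J. P j x})) +
      (\<Sum>J\<in>insert i ` Pow I. (-1) ^ card J * of_nat (card {x\<in>X. \<forall>j\<in>J. P j x}))"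
    unfolding Pow_insert using insert.hyps disj by (intro sum.union_disjoint) auto
  also have "(\<Sum>J\<in>insert i ` Pow I. (-1) ^ card J * (of_nat (card {x\<in>X. \<forall>j\<in>J. P j x}) :: rat)) =
      (\<Sum>J\<in>Pow I. (-1) ^ card (insert i J) * of_nat (card {x\<in>X. \<forall>j\<in>insert i J. P j x}))"
    using inj by (simp add: sum.reindex)
  also have "\<dots> = - (\<Sum>J\<in>Pow I. (-1) ^ card J * of_nat (card {x\<in>?X1. \<forall>j\<in>J. P j x}))"
    unfolding sum_negf[symmetric]
  proof (rule sum.cong[OF refl])
    fix J assume J: "J \<in> Pow I"
    then have "finite J" "i \<notin> J" using insert.hyps finite_subset by auto
    then have "card (insert i J) = Suc (card J)" by simp
    moreover have "{x\<in>X. \<forall>j\<in>insert i J. P j x} = {x\<in>?X1. \<forall>j\<in>J. P j x}" by auto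
    ultimately show "(-1) ^ card (insert i J) * (of_nat (card {x\<in>X. \<forall>j\<in>insert i J. P j x}) :: rat) =
        - ((-1) ^ card J * of_nat (card {x\<in>?X1. \<forall>j\<in>J. P j x}))" by simp
  qed
  finally show ?case using split ih1 ih2 by (simp add: of_nat_add)
qed

lemma lk_wsum_one: "finite V \<Longrightarrow> lk (wsum V (\<lambda>_. 1) f) i = card {u\<in>V. f u = i}"
  by (simp add: lk_wsum sum.inter_filter[symmetric])

lemma chrom_Sset:
  assumes "finite (fst G)"
  shows "chrom G a = of_nat (card {f \<in> Sset (fst G) (\<lambda>_. 1) a. proper_colouring G f})"
proof -
  have "{k \<in> fst G \<rightarrow>\<^sub>E (UNIV :: nat set). proper_colouring G k \<and> (\<forall>i. card {v \<in> fst G. k v = i} = Poly_Mapping.lookup a i)}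
     = {f \<in> Sset (fst G) (\<lambda>_. 1) a. proper_colouring G f}"
    unfolding Sset_def poly_mapping_eq_iff using assms lk_wsum_one[OF assms] by (auto simp: fun_eq_iff)
  then show ?thesis by (simp add: chrom_def)
qed

lemma sum_single_const: "finite J \<Longrightarrow> (\<Sum>u\<in>J. sg x (c u)) = sg x (\<Sum>u\<in>J. c u)"
  by (induction J rule: finite_induct) (auto simp: single_add)

lemma gen_quot:
  assumes V: "finite V" and cV: "c0 \<in> V" and J: "J \<subseteq> V - {c0}"
  defines "wJ \<equiv> (\<lambda>u. if u = c0 then card J + 1 else 1)"
  shows "card {f \<in> Sset V (\<lambda>_. 1) a. \<forall>v\<in>J. f v = f c0} = card (Sset (V - J) wJ a)"
proof -
  let ?V = "V"
  have finJ: "finite J" using J V finite_subset by blast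
  have 0: "c0 \<in> ?V - J" using cV J by auto
  have key: "wsum ?V (\<lambda>_. 1) f = wsum (?V - J) wJ f" if f: "\<forall>v\<in>J. f v = f c0" for f
  proof -
    have e: "(?V - J) \<union> J = ?V" using J by auto
    have "wsum ?V (\<lambda>_. 1) f = wsum ((?V - J) \<union> J) (\<lambda>_. 1) f" by (simp only: e)
    also have "\<dots> = wsum (?V - J) (\<lambda>_. 1) f + wsum J (\<lambda>_. 1) f"
      unfolding wsum_def using finJ V by (intro sum.union_disjoint) auto
    also have "wsum J (\<lambda>_. 1) f = (\<Sum>u\<in>J. sg (f c0) ((\<lambda>_. 1) u))"
      unfolding wsum_def using f by (intro sum.cong) auto
    also have "\<dots> = sg (f c0) (card J)"
      using finJ by (subst sum_single_const) auto
    finally have A: "wsum ?V (\<lambda>_. 1) f = wsum (?V - J) (\<lambda>_. 1) f + sg (f c0) (card J)" .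
    have "wsum (?V - J) wJ f = wsum (?V - J) (\<lambda>_. 1) f + (\<Sum>u\<in>?V - J. if u = c0 then sg (f u) (card J) else 0)"
      unfolding wsum_def wJ_def sum.distrib[symmetric] by (rule sum.cong) (auto simp: single_add[symmetric])
    also have "(\<Sum>u\<in>?V - J. if u = c0 then sg (f u) (card J) else 0) = sg (f c0) (card J)"
      using 0 V by (simp add: sum.delta sum.delta')
    finally show ?thesis using A by simp
  qed
  define \<phi> where "\<phi> f = restrict f (?V - J)" for f :: "nat \<Rightarrow> nat"
  define \<psi> where "\<psi> g = (\<lambda>v. if v \<in> J then g c0 else g v)" for g :: "nat \<Rightarrow> nat"
  have "bij_betw \<phi> {f \<in> Sset ?V (\<lambda>_. 1) a. \<forall>v\<in>J. f v = f c0} (Sset (?V - J) wJ a)"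
  proof (rule bij_betw_byWitness[where f'=\<psi>])
    show "\<forall>f\<in>{f \<in> Sset ?V (\<lambda>_. 1) a. \<forall>v\<in>J. f v = f c0}. \<psi> (\<phi> f) = f"
      using 0 J by (auto simp: \<phi>_def \<psi>_def Sset_def PiE_def extensional_def fun_eq_iff)
    show "\<forall>g\<in>Sset (?V - J) wJ a. \<phi> (\<psi> g) = g"
      using 0 by (auto simp: \<phi>_def \<psi>_def Sset_def PiE_def extensional_def fun_eq_iff)
    show "\<phi> ` {f \<in> Sset ?V (\<lambda>_. 1) a. \<forall>v\<in>J. f v = f c0} \<subseteq> Sset (?V - J) wJ a"
    proof
      fix x assume "x \<in> \<phi> ` {f \<in> Sset ?V (\<lambda>_. 1) a. \<forall>v\<in>J. f v = f c0}"
      then obtain f where f: "f \<in> Sset ?V (\<lambda>_. 1) a" "\<forall>v\<in>J. f v = f c0" and x: "x = \<phi> f" by auto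
      have "wsum (?V - J) wJ (\<phi> f) = wsum (?V - J) wJ f" unfolding \<phi>_def by (rule wsum_cong) auto
      then show "x \<in> Sset (?V - J) wJ a" using f key[of f] by (auto simp: x Sset_def \<phi>_def)
    qed
    show "\<psi> ` Sset (?V - J) wJ a \<subseteq> {f \<in> Sset ?V (\<lambda>_. 1) a. \<forall>v\<in>J. f v = f c0}"
    proof
      fix x assume "x \<in> \<psi> ` Sset (?V - J) wJ a"
      then obtain g where g: "g \<in> Sset (?V - J) wJ a" and x: "x = \<psi> g" by auto
      have c: "\<forall>v\<in>J. \<psi> g v = \<psi> g c0" using 0 by (auto simp: \<psi>_def)
      have "wsum (?V - J) wJ (\<psi> g) = wsum (?V - J) wJ g" unfolding \<psi>_def by (rule wsum_cong) auto
      moreover have "\<psi> g \<in> ?V \<rightarrow>\<^sub>E UNIV" using g J by (auto simp: \<psi>_def Sset_def PiE_def extensional_def)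
      ultimately show "x \<in> {f \<in> Sset ?V (\<lambda>_. 1) a. \<forall>v\<in>J. f v = f c0}"
        using g c key[of "\<psi> g"] by (auto simp: x Sset_def)
    qed
  qed
  then show ?thesis by (rule bij_betw_same_card)
qed

definition hk :: "nat \<Rightarrow> nat \<Rightarrow> nat multiset" where
  "hk h n = add_mset h (replicate_mset n 1)"

lemma hk_basic:
  "sum_mset (hk h n) = h + n" "size (hk h n) = Suc n"
  "h > 0 \<Longrightarrow> is_partition (hk h n)"
  "eps_part (hk h n) = (-1) ^ (h - 1)"
  "(\<forall>x\<in>#hk h n. odd x) \<longleftrightarrow> odd h"
  by (auto simp: hk_def is_partition_def eps_part_def)

lemma proper_star:
  assumes "k \<ge> 1"
  shows "proper_colouring (star k) f \<longleftrightarrow> (\<forall>v\<in>{1..<k}. \<not> (f v = f 0))"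
proof
  assume p: "proper_colouring (star k) f"
  show "\<forall>v\<in>{1..<k}. \<not> (f v = f 0)"
  proof
    fix v assume v: "v \<in> {1..<k}"
    have "0 \<in> fst (star k)" "v \<in> fst (star k)" "snd (star k) v 0" using v assms by (auto simp: star_def)
    then show "\<not> (f v = f 0)" using p unfolding proper_colouring_def by blast
  qed
next
  assume h: "\<forall>v\<in>{1..<k}. \<not> (f v = f 0)"
  show "proper_colouring (star k) f"
    unfolding proper_colouring_def star_def fst_conv snd_conv
  proof (intro ballI impI)
    fix u v assume u: "u \<in> {0..<k}" and v: "v \<in> {0..<k}" and e: "u = 0 \<and> v \<noteq> 0 \<or> v = 0 \<and> u \<noteq> 0"
    from e show "f u \<noteq> f v"
    proof
      assume "u = 0 \<and> v \<noteq> 0" then show ?thesis using h v by force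
    next
      assume "v = 0 \<and> u \<noteq> 0" then show ?thesis using h u by force
    qed
  qed
qed

lemma star_image:
  assumes k: "k \<ge> 1" and J: "J \<subseteq> {1..<k}"
  shows "image_mset (\<lambda>u. if u = 0 then card J + 1 else 1) (mset_set ({0..<k} - J)) = hk (card J + 1) (k - 1 - card J)"
proof -
  let ?A = "{0..<k} - J - {0}"
  have e: "mset_set ({0..<k} - J) = add_mset 0 (mset_set ?A)"
    using k J by (intro mset_set.remove) auto
  have cA: "card ?A = k - 1 - card J"
  proof -
    have "?A = {1..<k} - J" by auto
    then have "card ?A = card {1..<k} - card J" using J by (simp add: card_Diff_subset finite_subset)
    then show ?thesis by simp
  qed
  have "image_mset (\<lambda>u. if u = 0 then card J + 1 else 1) (mset_set ?A) = image_mset (\<lambda>_. 1) (mset_set ?A)"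
    by (rule image_mset_cong) auto
  then show ?thesis unfolding e using cA by (simp add: hk_def image_mset_const_eq del: mset_set.remove)
qed

lemma chrom_star:
  assumes k: "k \<ge> 1"
  shows "chrom (star k) = (\<lambda>a. \<Sum>J\<in>Pow {1..<k}. (-1) ^ card J * psum_part (hk (card J + 1) (k - 1 - card J)) a)"
proof
  fix a
  let ?V = "{0..<k}"
  have finX: "finite (Sset ?V (\<lambda>_. 1) a)" by (intro finite_Sset) auto
  have "chrom (star k) a = of_nat (card {f \<in> Sset ?V (\<lambda>_. 1) a. proper_colouring (star k) f})"
    by (subst chrom_Sset) (auto simp: star_def)
  also have "{f \<in> Sset ?V (\<lambda>_. 1) a. proper_colouring (star k) f} = {f \<in> Sset ?V (\<lambda>_. 1) a. \<forall>v\<in>{1..<k}. \<not> (f v = f 0)}"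
    using proper_star[OF k] by blast
  also have "(of_nat (card \<dots>) :: rat) = (\<Sum>J\<in>Pow {1..<k}. (-1) ^ card J * of_nat (card {f \<in> Sset ?V (\<lambda>_. 1) a. \<forall>v\<in>J. f v = f 0}))"
    using finX by (intro incl_excl) auto
  also have "\<dots> = (\<Sum>J\<in>Pow {1..<k}. (-1) ^ card J * psum_part (hk (card J + 1) (k - 1 - card J)) a)"
  proof (rule sum.cong[OF refl])
    fix J assume J: "J \<in> Pow {1..<k}"
    let ?w = "\<lambda>u. if u = 0 then card J + 1 else 1"
    have "card {f \<in> Sset ?V (\<lambda>_. 1) a. \<forall>v\<in>J. f v = f 0} = card (Sset (?V - J) ?w a)"
      using J k by (intro gen_quot) auto
    moreover have "W (?V - J) ?w = psum_part (hk (card J + 1) (k - 1 - card J))"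
      using J k by (subst W_psum_part) (auto simp: star_image)
    then have "of_nat (card (Sset (?V - J) ?w a)) = psum_part (hk (card J + 1) (k - 1 - card J)) a"
      unfolding W_def by (rule fun_cong)
    ultimately show "(-1) ^ card J * (of_nat (card {f \<in> Sset ?V (\<lambda>_. 1) a. \<forall>v\<in>J. f v = f 0}) :: rat) =
        (-1) ^ card J * psum_part (hk (card J + 1) (k - 1 - card J)) a"
      by (simp only:)
  qed
  finally show "chrom (star k) a = (\<Sum>J\<in>Pow {1..<k}. (-1) ^ card J * psum_part (hk (card J + 1) (k - 1 - card J)) a)" .
qed

lemma lincomb_group:
  assumes "finite A"
  shows "(\<lambda>a. \<Sum>J\<in>A. d J * b (g J) a) = lincomb (\<lambda>mu. \<Sum>J\<in>{J\<in>A. g J = mu}. d J) b (g ` A)"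
proof
  fix a
  have "(\<Sum>J\<in>A. d J * b (g J) a) = (\<Sum>mu\<in>g ` A. \<Sum>J\<in>{J\<in>A. g J = mu}. d J * b (g J) a)"
    using assms by (rule sum.image_gen)
  also have "\<dots> = (\<Sum>mu\<in>g ` A. (\<Sum>J\<in>{J\<in>A. g J = mu}. d J) * b mu a)"
    by (rule sum.cong[OF refl]) (simp add: sum_distrib_right)
  finally show "(\<Sum>J\<in>A. d J * b (g J) a) = lincomb (\<lambda>mu. \<Sum>J\<in>{J\<in>A. g J = mu}. d J) b (g ` A) a"
    by (simp add: lincomb_def)
qed

lemma eps_hk: "h > 0 \<Longrightarrow> eps_part (hk h n) = (if odd h then 1 else -1)"
  by (simp add: hk_basic(4) minus_one_power_iff)

definition Exp :: "sf \<Rightarrow> nat multiset \<Rightarrow> bool" where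
  "Exp F la \<longleftrightarrow> (\<exists>T d. finite T \<and> T \<subseteq> OP (sum_mset la) \<and> la \<in> T \<and> d la \<noteq> 0 \<and>
      (\<forall>mu\<in>T. mu \<noteq> la \<longrightarrow> size la < size mu) \<and> F = lincomb d psum_part T)"

lemma Y_exp:
  assumes fin: "finite S" and hooks: "\<forall>mu\<in>S. \<exists>h n. h > 0 \<and> mu = hk h n \<and> h + n = r"
    and top: "{#r#} \<in> S" and ctop: "c {#r#} \<noteq> 0" and r: "odd r"
  shows "Exp (\<lambda>a. (lincomb c psum_part S a + omega (lincomb c psum_part S) a) / 2) {#r#}"
proof -
  have hk_of: "\<exists>h n. h > 0 \<and> mu = hk h n \<and> h + n = r" if "mu \<in> S" for mu
    using hooks that by (rule bspec)
  have parts: "\<forall>mu\<in>S. is_partition mu"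
  proof
    fix mu assume "mu \<in> S"
    from hk_of[OF this] obtain h n where "h > 0" "mu = hk h n" by auto
    then show "is_partition mu" by (simp add: hk_basic(3))
  qed
  let ?T = "{mu\<in>S. \<forall>x\<in>#mu. odd x}"
  have eps: "eps_part mu = (if \<forall>x\<in>#mu. odd x then 1 else -1)" if mu_in: "mu \<in> S" for mu
  proof -
    obtain h n where "h > 0" "mu = hk h n" using hk_of[OF mu_in] by auto
    then show ?thesis by (simp only: eps_hk hk_basic(5))
  qed
  have F: "(\<lambda>a. (lincomb c psum_part S a + omega (lincomb c psum_part S) a) / 2) = lincomb c psum_part ?T"
  proof
    fix a
    have "(lincomb c psum_part S a + omega (lincomb c psum_part S) a) / 2 =
        (\<Sum>mu\<in>S. (c mu * psum_part mu a + c mu * eps_part mu * psum_part mu a) / 2)"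
    proof -
      have om: "omega (lincomb c psum_part S) a = (\<Sum>mu\<in>S. c mu * eps_part mu * psum_part mu a)"
        unfolding omega_lincomb[OF fin parts] by (simp add: lincomb_def)
      show ?thesis unfolding om sum_divide_distrib[symmetric] sum.distrib by (simp add: lincomb_def)
    qed
    also have "\<dots> = (\<Sum>mu\<in>?T. c mu * psum_part mu a)"
    proof (rule sum.mono_neutral_cong_right[OF fin])
      show "?T \<subseteq> S" by blast
      show "\<forall>i\<in>S - ?T. (c i * psum_part i a + c i * eps_part i * psum_part i a) / 2 = 0"
      proof
        fix i assume i: "i \<in> S - ?T"
        then have "eps_part i = -1" using eps[of i] by auto
        then show "(c i * psum_part i a + c i * eps_part i * psum_part i a) / 2 = 0" by simp
      qed
      fix i assume i: "i \<in> ?T"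
      then have "eps_part i = 1" using eps[of i] by auto
      then show "(c i * psum_part i a + c i * eps_part i * psum_part i a) / 2 = c i * psum_part i a" by simp
    qed
    finally show "(lincomb c psum_part S a + omega (lincomb c psum_part S) a) / 2 = lincomb c psum_part ?T a"
      by (simp add: lincomb_def)
  qed
  have sub: "?T \<subseteq> OP r"
  proof
    fix mu assume mu: "mu \<in> ?T"
    then have "mu \<in> S" by simp
    from hk_of[OF this] obtain h n where "h > 0" "mu = hk h n" "h + n = r" by auto
    then show "mu \<in> OP r" using mu hk_basic(1,3) unfolding OP_def by simp
  qed
  have sz: "\<forall>mu\<in>?T. mu \<noteq> {#r#} \<longrightarrow> size {#r#} < size mu"
  proof (intro ballI impI)
    fix mu assume mu: "mu \<in> ?T" "mu \<noteq> {#r#}"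
    then have "mu \<in> S" by simp
    from hk_of[OF this] obtain h n where hn: "h > 0" "mu = hk h n" "h + n = r" by auto
    have "n \<noteq> 0"
    proof
      assume "n = 0"
      then have "mu = {#r#}" using hn by (simp add: hk_def)
      with mu show False by simp
    qed
    then show "size {#r#} < size mu" using hn by (simp add: hk_basic)
  qed
  show ?thesis unfolding Exp_def F
  proof (intro exI[of _ ?T] exI[of _ c] conjI)
    show "finite ?T" using fin by simp
    show "?T \<subseteq> OP (sum_mset {#r#})" using sub by simp
    show "{#r#} \<in> ?T" using top r by simp
    show "c {#r#} \<noteq> 0" by (rule ctop)
    show "\<forall>mu\<in>?T. mu \<noteq> {#r#} \<longrightarrow> size {#r#} < size mu" by (rule sz)
  qed (rule refl)
qed


definition gS :: "nat \<Rightarrow> nat set \<Rightarrow> nat multiset" where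
  "gS k J = hk (card J + 1) (k - 1 - card J)"

definition cS :: "nat \<Rightarrow> nat multiset \<Rightarrow> rat" where
  "cS k mu = (\<Sum>J\<in>{J\<in>Pow {1..<k}. gS k J = mu}. (-1) ^ card J)"

lemma chrom_star_lincomb:
  assumes "k \<ge> 1"
  shows "chrom (star k) = lincomb (cS k) psum_part (gS k ` Pow {1..<k})"
  unfolding chrom_star[OF assms] cS_def gS_def[abs_def]
  by (rule lincomb_group) simp

lemma star_hooks:
  assumes "k \<ge> 1"
  shows "\<forall>mu\<in>gS k ` Pow {1..<k}. \<exists>h n. h > 0 \<and> mu = hk h n \<and> h + n = k"
proof
  fix mu assume "mu \<in> gS k ` Pow {1..<k}"
  then obtain J where J: "J \<subseteq> {1..<k}" and mu: "mu = gS k J" by auto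
  have "card J \<le> card {1..<k}" using J by (intro card_mono) auto
  then have "card J \<le> k - 1" by simp
  then show "\<exists>h n. h > 0 \<and> mu = hk h n \<and> h + n = k"
    using assms by (intro exI[of _ "card J + 1"] exI[of _ "k - 1 - card J"]) (simp add: mu gS_def)
qed

lemma star_top:
  assumes "k \<ge> 1"
  shows "{J\<in>Pow {1..<k}. gS k J = {#k#}} = {{1..<k}}"
proof (intro equalityI subsetI)
  fix J assume "J \<in> {J\<in>Pow {1..<k}. gS k J = {#k#}}"
  then have J: "J \<subseteq> {1..<k}" and g: "gS k J = {#k#}" by auto
  have "size (gS k J) = 1" using g by simp
  then have "k - 1 - card J = 0" by (simp add: gS_def hk_basic)
  moreover have "card J \<le> card {1..<k}" using J by (intro card_mono) auto
  ultimately have "card J = card {1..<k}" by simp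
  then have "J = {1..<k}" using J by (intro card_subset_eq) auto
  then show "J \<in> {{1..<k}}" by simp
next
  fix J assume "J \<in> {{1..<k}}"
  then show "J \<in> {J\<in>Pow {1..<k}. gS k J = {#k#}}" using assms by (simp add: gS_def hk_def)
qed

lemma cS_top:
  assumes "k \<ge> 1"
  shows "cS k {#k#} = (-1) ^ (k - 1)"
  unfolding cS_def star_top[OF assms] by simp

lemma Ysf_lincomb:
  "chrom G = F \<Longrightarrow> Ysf G = (\<lambda>a. (F a + omega F a) / 2)"
  by (simp add: Ysf_def)

lemma Y_star:
  assumes "odd k"
  shows "Exp (Ysf (star k)) {#k#}"
proof -
  have k: "k \<ge> 1" using assms by (cases k) auto
  have "{1..<k} \<in> {J\<in>Pow {1..<k}. gS k J = {#k#}}" unfolding star_top[OF k] by simp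
  then have "gS k {1..<k} = {#k#}" by simp
  then have top: "{#k#} \<in> gS k ` Pow {1..<k}" by (intro image_eqI[of _ _ "{1..<k}"]) auto
  have "cS k {#k#} \<noteq> 0" using cS_top[OF k] by simp
  then show ?thesis
    unfolding Ysf_lincomb[OF chrom_star_lincomb[OF k]]
    using star_hooks[OF k] top assms by (intro Y_exp) auto
qed

lemma proper_cycle3: "proper_colouring cycle3 f \<longleftrightarrow> f 0 \<noteq> f 1 \<and> f 0 \<noteq> f 2 \<and> f 1 \<noteq> f 2"
  unfolding proper_colouring_def cycle3_def by auto

lemma chrom_cycle3:
  "chrom cycle3 a = chrom (star 3) a - psum_part (hk 2 1) a + psum_part (hk 3 0) a"
proof -
  let ?V = "{0..<3::nat}"
  let ?X = "Sset ?V (\<lambda>_. 1) a"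
  have finX: "finite ?X" by (intro finite_Sset) auto
  have V3: "fst cycle3 = ?V" by (auto simp: cycle3_def)
  have c3: "chrom cycle3 a = of_nat (card {f\<in>?X. f 0 \<noteq> f 1 \<and> f 0 \<noteq> f 2 \<and> f 1 \<noteq> f 2})"
    using chrom_Sset[of cycle3 a] V3 proper_cycle3 by simp
  have s3: "chrom (star 3) a = of_nat (card {f\<in>?X. f 1 \<noteq> f 0 \<and> f 2 \<noteq> f 0})"
  proof -
    have "chrom (star 3) a = of_nat (card {f\<in>?X. proper_colouring (star 3) f})"
      by (subst chrom_Sset) (auto simp: star_def)
    also have "{f\<in>?X. proper_colouring (star 3) f} = {f\<in>?X. f 1 \<noteq> f 0 \<and> f 2 \<noteq> f 0}"
    proof -
      have "proper_colouring (star 3) f \<longleftrightarrow> (\<forall>v\<in>{1..<3}. \<not> (f v = f 0))" for f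
        by (rule proper_star) simp
      moreover have "(\<forall>v\<in>{1..<3::nat}. \<not> (f v = f 0)) \<longleftrightarrow> f 1 \<noteq> f 0 \<and> f 2 \<noteq> f 0" for f :: "nat \<Rightarrow> nat"
      proof -
        have "{1..<3::nat} = {1, 2}" by auto
        then show ?thesis by simp
      qed
      ultimately show ?thesis by simp
    qed
    finally show ?thesis .
  qed
  let ?B = "{f\<in>?X. f 1 \<noteq> f 0 \<and> f 2 \<noteq> f 0 \<and> f 1 = f 2}"
  have e1: "card {f\<in>?X. f 1 \<noteq> f 0 \<and> f 2 \<noteq> f 0} = card {f\<in>?X. f 0 \<noteq> f 1 \<and> f 0 \<noteq> f 2 \<and> f 1 \<noteq> f 2} + card ?B"
  proof -
    have "{f\<in>?X. f 1 \<noteq> f 0 \<and> f 2 \<noteq> f 0} = {f\<in>?X. f 0 \<noteq> f 1 \<and> f 0 \<noteq> f 2 \<and> f 1 \<noteq> f 2} \<union> ?B" by auto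
    then show ?thesis using finX by (simp add: card_Un_disjoint[symmetric] disjoint_iff)
  qed
  have e2: "card {f\<in>?X. \<forall>v\<in>{2}. f v = f 1} = card ?B + card {f\<in>?X. \<forall>v\<in>{1,2}. f v = f 0}"
  proof -
    have "{f\<in>?X. \<forall>v\<in>{2}. f v = f 1} = ?B \<union> {f\<in>?X. \<forall>v\<in>{1,2}. f v = f 0}" by auto
    then show ?thesis using finX by (simp add: card_Un_disjoint[symmetric] disjoint_iff)
  qed
  have q1: "card {f\<in>?X. \<forall>v\<in>{1,2}. f v = f 0} = card (Sset (?V - {1,2}) (\<lambda>u. if u = 0 then card {1::nat,2} + 1 else 1) a)"
    by (rule gen_quot) auto
  have q2: "card {f\<in>?X. \<forall>v\<in>{2}. f v = f 1} = card (Sset (?V - {2}) (\<lambda>u. if u = 1 then card {2::nat} + 1 else 1) a)"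
    by (rule gen_quot) auto
  have w1: "W (?V - {1,2}) (\<lambda>u. if u = 0 then card {1::nat,2} + 1 else 1) = psum_part (hk 3 0)"
  proof -
    have e: "?V - {1,2} = {0}" by auto
    show ?thesis unfolding e by (subst W_psum_part) (auto simp: hk_def numeral_3_eq_3 numeral_2_eq_2)
  qed
  have w2: "W (?V - {2}) (\<lambda>u. if u = 1 then card {2::nat} + 1 else 1) = psum_part (hk 2 1)"
  proof -
    have e: "?V - {2} = {0, 1}" by auto
    have m: "{#Suc 0, Suc (Suc 0)#} = {#Suc (Suc 0), Suc 0#}" by (simp add: add_mset_commute)
    show ?thesis unfolding e by (subst W_psum_part) (auto simp: hk_def numeral_3_eq_3 numeral_2_eq_2 m)
  qed
  have "chrom cycle3 a = chrom (star 3) a - (of_nat (card {f\<in>?X. \<forall>v\<in>{2}. f v = f 1}) - of_nat (card {f\<in>?X. \<forall>v\<in>{1,2}. f v = f 0}))"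
    unfolding c3 s3 e1 e2 by simp
  also have "of_nat (card {f\<in>?X. \<forall>v\<in>{2}. f v = f 1}) = psum_part (hk 2 1) a"
    unfolding q2 w2[symmetric] W_def by simp
  also have "of_nat (card {f\<in>?X. \<forall>v\<in>{1,2}. f v = f 0}) = psum_part (hk 3 0) a"
    unfolding q1 w1[symmetric] W_def by simp
  finally show ?thesis by simp
qed

lemma lincomb_plus_one:
  assumes "finite S"
  shows "(\<lambda>a. lincomb c b S a + e * b x a) = lincomb (\<lambda>i. (if i \<in> S then c i else 0) + (if i = x then e else 0)) b (insert x S)"
proof
  fix a
  have fi: "finite (insert x S)" using assms by simp
  have "lincomb (\<lambda>i. (if i \<in> S then c i else 0) + (if i = x then e else 0)) b (insert x S) a =
     lincomb (\<lambda>i. if i \<in> S then c i else 0) b (insert x S) a + (\<Sum>i\<in>insert x S. (if i = x then e else 0) * b i a)"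
    unfolding lincomb_def by (simp add: distrib_right sum.distrib)
  also have "lincomb (\<lambda>i. if i \<in> S then c i else 0) b (insert x S) = lincomb c b S"
    using fi by (intro lincomb_extend[symmetric]) auto
  also have "(\<Sum>i\<in>insert x S. (if i = x then e else 0) * b i a) = (\<Sum>i\<in>insert x S. if i = x then e * b i a else 0)"
    by (rule sum.cong) auto
  also have "\<dots> = e * b x a" using fi by (simp add: sum.delta)
  finally show "lincomb c b S a + e * b x a = lincomb (\<lambda>i. (if i \<in> S then c i else 0) + (if i = x then e else 0)) b (insert x S) a" by simp
qed

lemma Y_C3: "Exp (Ysf cycle3) {#3#}"
proof -
  let ?S = "gS 3 ` Pow {1..<3}"
  let ?S1 = "insert (hk 2 1) ?S"
  let ?c1 = "\<lambda>i. (if i \<in> ?S then cS 3 i else 0) + (if i = hk 2 1 then - 1 else 0)"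
  let ?S2 = "insert (hk 3 0) ?S1"
  let ?c2 = "\<lambda>i. (if i \<in> ?S1 then ?c1 i else 0) + (if i = hk 3 0 then 1 else 0)"
  have fS: "finite ?S" by simp
  have ch: "chrom cycle3 = lincomb ?c2 psum_part ?S2"
  proof -
    have "chrom cycle3 = (\<lambda>a. (\<lambda>a. lincomb (cS 3) psum_part ?S a + (- 1) * psum_part (hk 2 1) a) a + 1 * psum_part (hk 3 0) a)"
      using chrom_cycle3 chrom_star_lincomb[of 3] by (auto simp: fun_eq_iff)
    also have "(\<lambda>a. lincomb (cS 3) psum_part ?S a + (- 1) * psum_part (hk 2 1) a) = lincomb ?c1 psum_part ?S1"
      using fS by (rule lincomb_plus_one)
    also have "(\<lambda>a. lincomb ?c1 psum_part ?S1 a + 1 * psum_part (hk 3 0) a) = lincomb ?c2 psum_part ?S2"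
      using fS by (intro lincomb_plus_one) simp
    finally show ?thesis .
  qed
  have k3: "(3::nat) \<ge> 1" by simp
  have topS: "{#3#} \<in> ?S"
  proof -
    have "{1..<3} \<in> {J\<in>Pow {1..<3}. gS 3 J = {#3#}}" unfolding star_top[OF k3] by simp
    then have "gS 3 {1..<3} = {#3#}" by simp
    then show ?thesis by (intro image_eqI[of _ _ "{1..<3}"]) auto
  qed
  have h30: "hk 3 0 = {#3#}" by (simp add: hk_def)
  have h21: "hk 2 1 \<noteq> {#3#}" by (simp add: hk_def)
  have ctop: "?c2 {#3#} = 2"
    using topS h30 h21 cS_top[OF k3] by simp
  have hooks: "\<forall>mu\<in>?S2. \<exists>h n. h > 0 \<and> mu = hk h n \<and> h + n = 3"
  proof
    fix mu assume mu: "mu \<in> ?S2"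
    show "\<exists>h n. h > 0 \<and> mu = hk h n \<and> h + n = 3"
    proof (cases "mu = hk 3 0")
      case True then show ?thesis by (intro exI[of _ 3] exI[of _ 0]) simp
    next
      case F1: False
      show ?thesis
      proof (cases "mu = hk 2 1")
        case True then show ?thesis by (intro exI[of _ 2] exI[of _ 1]) simp
      next
        case False
        then have "mu \<in> ?S" using mu F1 by simp
        then show ?thesis using star_hooks[OF k3] by blast
      qed
    qed
  qed
  show ?thesis
    unfolding Ysf_lincomb[OF ch]
  proof (rule Y_exp)
    show "finite ?S2" by simp
    show "{#3#} \<in> ?S2" by (simp add: h30)
    show "?c2 {#3#} \<noteq> 0" using ctop by simp
  qed (use hooks in auto)
qed

lemma sf_mult_lincomb:
  assumes "finite T" "finite U"
  shows "sf_mult (lincomb d b T) (lincomb e b' U) a = (\<Sum>x\<in>T. \<Sum>y\<in>U. d x * e y * sf_mult (b x) (b' y) a)"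
proof -
  let ?D = "{(p, q). p + q = (a::mono)}"
  have "sf_mult (lincomb d b T) (lincomb e b' U) a = (\<Sum>(p, q)\<in>?D. (\<Sum>x\<in>T. d x * b x p) * (\<Sum>y\<in>U. e y * b' y q))"
    by (simp add: sf_mult_def lincomb_def)
  also have "\<dots> = (\<Sum>(p, q)\<in>?D. \<Sum>x\<in>T. \<Sum>y\<in>U. d x * e y * (b x p * b' y q))"
    by (rule sum.cong[OF refl]) (auto simp: sum_product algebra_simps)
  also have "\<dots> = (\<Sum>x\<in>T. \<Sum>(p, q)\<in>?D. \<Sum>y\<in>U. d x * e y * (b x p * b' y q))"
    by (subst sum.swap) (simp add: case_prod_beta)
  also have "\<dots> = (\<Sum>x\<in>T. \<Sum>y\<in>U. \<Sum>(p, q)\<in>?D. d x * e y * (b x p * b' y q))"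
    by (rule sum.cong[OF refl]) (subst sum.swap, simp add: case_prod_beta)
  also have "\<dots> = (\<Sum>x\<in>T. \<Sum>y\<in>U. d x * e y * sf_mult (b x) (b' y) a)"
    by (simp add: sf_mult_def sum_distrib_left case_prod_beta)
  finally show ?thesis .
qed

lemma OP_add: "x \<in> OP m \<Longrightarrow> y \<in> OP k \<Longrightarrow> x + y \<in> OP (m + k)"
  by (auto simp: OP_def is_partition_def)

lemma OP_partition: "x \<in> OP m \<Longrightarrow> is_partition x"
  by (simp add: OP_def)

lemma Exp_mult:
  assumes F: "Exp F la" and G: "Exp G mu"
  shows "Exp (sf_mult F G) (la + mu)"
proof -
  obtain T d where T: "finite T" "T \<subseteq> OP (sum_mset la)" "la \<in> T" "d la \<noteq> 0"
    "\<forall>x\<in>T. x \<noteq> la \<longrightarrow> size la < size x" and Fe: "F = lincomb d psum_part T"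
    using F unfolding Exp_def by blast
  obtain U e where U: "finite U" "U \<subseteq> OP (sum_mset mu)" "mu \<in> U" "e mu \<noteq> 0"
    "\<forall>x\<in>U. x \<noteq> mu \<longrightarrow> size mu < size x" and Ge: "G = lincomb e psum_part U"
    using G unfolding Exp_def by blast
  let ?g = "\<lambda>p :: nat multiset \<times> nat multiset. fst p + snd p"
  let ?A = "T \<times> U"
  let ?c = "\<lambda>nu. \<Sum>p\<in>{p\<in>?A. ?g p = nu}. d (fst p) * e (snd p)"
  have prod: "sf_mult F G = lincomb ?c psum_part (?g ` ?A)"
  proof -
    have "sf_mult F G = (\<lambda>a. \<Sum>p\<in>?A. (d (fst p) * e (snd p)) * psum_part (?g p) a)"
    proof
      fix a
      have "sf_mult F G a = (\<Sum>x\<in>T. \<Sum>y\<in>U. d x * e y * sf_mult (psum_part x) (psum_part y) a)"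
        unfolding Fe Ge by (rule sf_mult_lincomb[OF T(1) U(1)])
      also have "\<dots> = (\<Sum>x\<in>T. \<Sum>y\<in>U. d x * e y * psum_part (x + y) a)"
      proof (intro sum.cong refl)
        fix x y assume "x \<in> T" "y \<in> U"
        then have "is_partition x" "is_partition y" using T U OP_partition by blast+
        then show "d x * e y * sf_mult (psum_part x) (psum_part y) a = d x * e y * psum_part (x + y) a"
          by (simp add: psum_part_add)
      qed
      also have "\<dots> = (\<Sum>p\<in>?A. (d (fst p) * e (snd p)) * psum_part (?g p) a)"
        by (simp add: sum.cartesian_product case_prod_beta)
      finally show "sf_mult F G a = (\<Sum>p\<in>?A. (d (fst p) * e (snd p)) * psum_part (?g p) a)" .
    qed
    also have "\<dots> = lincomb ?c psum_part (?g ` ?A)"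
      using T U by (intro lincomb_group) simp
    finally show ?thesis .
  qed
  have szT: "size la \<le> size x" if "x \<in> T" for x using T that by (cases "x = la") auto
  have szU: "size mu \<le> size y" if "y \<in> U" for y using U that by (cases "y = mu") auto
  have eqc: "x = la \<and> y = mu" if "x \<in> T" "y \<in> U" "size (x + y) \<le> size (la + mu)" for x y
  proof (rule ccontr)
    assume "\<not> (x = la \<and> y = mu)"
    then have "size la < size x \<or> size mu < size y" using T U that by auto
    then have "size (la + mu) < size (x + y)" using szT[OF that(1)] szU[OF that(2)] by auto
    then show False using that(3) by simp
  qed
  have fib: "{p\<in>?A. ?g p = la + mu} = {(la, mu)}"
  proof (intro equalityI subsetI)
    fix p assume p: "p \<in> {p\<in>?A. ?g p = la + mu}"
    then have "fst p = la \<and> snd p = mu" using eqc[of "fst p" "snd p"] by auto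
    then show "p \<in> {(la, mu)}" by (cases p) auto
  qed (use T U in auto)
  show ?thesis unfolding Exp_def prod
  proof (intro exI[of _ "?g ` ?A"] exI[of _ ?c] conjI)
    show "finite (?g ` ?A)" using T U by simp
    show "?g ` ?A \<subseteq> OP (sum_mset (la + mu))"
      using T(2) U(2) by (auto intro!: OP_add)
    show "la + mu \<in> ?g ` ?A" using T U by (intro image_eqI[of _ _ "(la, mu)"]) auto
    show "?c (la + mu) \<noteq> 0" unfolding fib using T U by simp
    show "\<forall>nu\<in>?g ` ?A. nu \<noteq> la + mu \<longrightarrow> size (la + mu) < size nu"
    proof (intro ballI impI)
      fix nu assume nu: "nu \<in> ?g ` ?A" "nu \<noteq> la + mu"
      then obtain x y where xy: "x \<in> T" "y \<in> U" "nu = x + y" by auto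
      show "size (la + mu) < size nu"
      proof (rule ccontr)
        assume "\<not> size (la + mu) < size nu"
        then have "x = la \<and> y = mu" using eqc[OF xy(1,2)] xy(3) by simp
        then show False using nu xy by simp
      qed
    qed
  qed (rule refl)
qed

lemma Exp_one: "Exp sf_one {#}"
  unfolding Exp_def
proof (intro exI[of _ "{{#}}"] exI[of _ "\<lambda>_. 1"] conjI)
  show "sf_one = lincomb (\<lambda>_. 1) psum_part {{#}}"
    by (simp add: lincomb_def psum_part_def sf_prod_list_def)
qed (auto simp: OP_def is_partition_def)

lemma Exp_prod_list:
  assumes "\<forall>r\<in>set xs. Exp (Y r) {#r#}"
  shows "Exp (sf_prod_list (map Y xs)) (mset xs)"
  using assms
proof (induction xs)
  case Nil then show ?case by (simp add: sf_prod_list_def Exp_one)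
next
  case (Cons x xs)
  have "Exp (sf_mult (Y x) (sf_prod_list (map Y xs))) ({#x#} + mset xs)"
    using Cons by (intro Exp_mult) auto
  then show ?case by (simp add: sf_prod_list_def)
qed

lemma size_le_sum: "is_partition la \<Longrightarrow> size la \<le> sum_mset la"
proof (induction la)
  case empty then show ?case by simp
next
  case (add x la)
  then have "x > 0" "is_partition la" by (auto simp: is_partition_def)
  with add show ?case by simp
qed

lemma finite_OP: "finite (OP n)"
proof -
  have "OP n \<subseteq> mset ` {xs. set xs \<subseteq> {1..n} \<and> length xs \<le> n}"
  proof
    fix la assume la: "la \<in> OP n"
    then have p: "is_partition la" "sum_mset la = n" by (auto simp: OP_def)
    let ?xs = "sorted_list_of_multiset la"
    have "set ?xs \<subseteq> {1..n}"
    proof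
      fix x assume "x \<in> set ?xs"
      then have x: "x \<in># la" by simp
      then have "x \<ge> 1" using partition_pos[OF p(1)] by (simp add: Suc_le_eq)
      moreover have "x \<le> n" using x p(2) by (metis le_add1 sum_mset.remove)
      ultimately show "x \<in> {1..n}" by simp
    qed
    moreover have "length ?xs \<le> n" using size_le_sum[OF p(1)] p(2) by (simp add: len_sl)
    ultimately show "la \<in> mset ` {xs. set xs \<subseteq> {1..n} \<and> length xs \<le> n}"
      by (intro image_eqI[of _ _ ?xs]) auto
  qed
  moreover have "finite {xs. set xs \<subseteq> {1..n} \<and> length xs \<le> (n::nat)}"
    by (rule finite_lists_length_le) simp
  ultimately show ?thesis by (rule finite_subset[OF _ finite_imageI])
qed

definition Span :: "nat \<Rightarrow> (nat multiset \<Rightarrow> sf) \<Rightarrow> sf set" where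
  "Span n b = {f. \<exists>c. f = lincomb c b (OP n)}"

lemma span_zero: "(\<lambda>_. 0) \<in> Span n b"
  unfolding Span_def by (rule CollectI, rule exI[of _ "\<lambda>_. 0"]) (simp add: lincomb_def fun_eq_iff)

lemma span_add: "f \<in> Span n b \<Longrightarrow> g \<in> Span n b \<Longrightarrow> (\<lambda>a. f a + g a) \<in> Span n b"
  unfolding Span_def
proof clarify
  fix c c' show "\<exists>c''. (\<lambda>a. lincomb c b (OP n) a + lincomb c' b (OP n) a) = lincomb c'' b (OP n)"
    by (rule exI[of _ "\<lambda>i. c i + c' i"]) (simp add: lincomb_def distrib_right sum.distrib fun_eq_iff)
qed

lemma span_scale: "f \<in> Span n b \<Longrightarrow> (\<lambda>a. r * f a) \<in> Span n b"
  unfolding Span_def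
proof clarify
  fix c show "\<exists>c''. (\<lambda>a. r * lincomb c b (OP n) a) = lincomb c'' b (OP n)"
    by (rule exI[of _ "\<lambda>i. r * c i"]) (simp add: lincomb_def sum_distrib_left mult.assoc fun_eq_iff)
qed

lemma span_lincomb:
  assumes "finite I" "\<forall>i\<in>I. f i \<in> Span n b"
  shows "lincomb c f I \<in> Span n b"
  using assms
proof (induction I rule: finite_induct)
  case empty
  then show ?case using span_zero by (simp add: lincomb_def)
next
  case (insert x I)
  have "lincomb c f (insert x I) = (\<lambda>a. c x * f x a + lincomb c f I a)"
    using insert.hyps by (simp add: lincomb_def fun_eq_iff)
  moreover have "(\<lambda>a. c x * f x a) \<in> Span n b" using insert.prems by (intro span_scale) auto
  moreover have "lincomb c f I \<in> Span n b" using insert by auto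
  ultimately show ?case using span_add[of "\<lambda>a. c x * f x a" n b "lincomb c f I"] by simp
qed

lemma span_basis:
  assumes "la \<in> OP n" shows "b la \<in> Span n b"
proof -
  have "lincomb (\<lambda>i. if i = la then 1 else 0) b (OP n) x = b la x" for x
  proof -
    have "lincomb (\<lambda>i. if i = la then 1 else 0) b (OP n) x = (\<Sum>i\<in>OP n. if i = la then b i x else 0)"
      unfolding lincomb_def by (rule sum.cong) auto
    also have "\<dots> = b la x" using assms finite_OP[of n] by (simp add: sum.delta)
    finally show ?thesis .
  qed
  then show ?thesis unfolding Span_def by (intro CollectI exI[of _ "\<lambda>i. if i = la then 1 else 0"]) (simp add: fun_eq_iff)
qed

lemma Exp_matrix:
  assumes "la \<in> OP n" "Exp F la"
  shows "\<exists>m. F = lincomb m psum_part (OP n) \<and> m la \<noteq> 0 \<and> (\<forall>mu\<in>OP n. m mu \<noteq> 0 \<longrightarrow> mu = la \<or> size la < size mu)"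
proof -
  have sl: "sum_mset la = n" using assms by (simp add: OP_def)
  obtain T d where T: "finite T" "T \<subseteq> OP n" "la \<in> T" "d la \<noteq> 0"
    "\<forall>x\<in>T. x \<noteq> la \<longrightarrow> size la < size x" and Fe: "F = lincomb d psum_part T"
    using assms(2) sl unfolding Exp_def by blast
  show ?thesis
  proof (intro exI[of _ "\<lambda>i. if i \<in> T then d i else 0"] conjI)
    show "F = lincomb (\<lambda>i. if i \<in> T then d i else 0) psum_part (OP n)"
      unfolding Fe using T(2) finite_OP by (intro lincomb_extend) auto
    show "(if la \<in> T then d la else 0) \<noteq> 0" using T by simp
    show "\<forall>mu\<in>OP n. (if mu \<in> T then d mu else 0) \<noteq> 0 \<longrightarrow> mu = la \<or> size la < size mu"
      using T(5) by auto
  qed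
qed

lemma basis_from_Exp:
  assumes E: "\<forall>la\<in>OP n. Exp (b la) la"
  shows "is_basis_of_Gamma n b"
proof -
  have "\<forall>la\<in>OP n. \<exists>m. b la = lincomb m psum_part (OP n) \<and> m la \<noteq> 0 \<and> (\<forall>mu\<in>OP n. m mu \<noteq> 0 \<longrightarrow> mu = la \<or> size la < size mu)"
  proof
    fix la assume la: "la \<in> OP n"
    then have "Exp (b la) la" using E by blast
    from Exp_matrix[OF la this] show "\<exists>m. b la = lincomb m psum_part (OP n) \<and> m la \<noteq> 0 \<and> (\<forall>mu\<in>OP n. m mu \<noteq> 0 \<longrightarrow> mu = la \<or> size la < size mu)" .
  qed
  from bchoice[OF this] obtain M where M: "\<forall>la\<in>OP n. b la = lincomb (M la) psum_part (OP n) \<and> M la la \<noteq> 0 \<and> (\<forall>mu\<in>OP n. M la mu \<noteq> 0 \<longrightarrow> mu = la \<or> size la < size mu)"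
    by (elim exE) (rule that)
  have fin: "finite (OP n)" by (rule finite_OP)
  have parts: "\<forall>mu\<in>OP n. is_partition mu" by (simp add: OP_def)
  have conv: "lincomb c b (OP n) = lincomb (\<lambda>mu. \<Sum>la\<in>OP n. c la * M la mu) psum_part (OP n)" for c
  proof
    fix a
    have "lincomb c b (OP n) a = (\<Sum>la\<in>OP n. c la * (\<Sum>mu\<in>OP n. M la mu * psum_part mu a))"
      unfolding lincomb_def
    proof (intro sum.cong refl)
      fix la assume la: "la \<in> OP n"
      have "b la = lincomb (M la) psum_part (OP n)" using M la by blast
      then show "c la * b la a = c la * (\<Sum>mu\<in>OP n. M la mu * psum_part mu a)" by (simp add: lincomb_def)
    qed
    also have "\<dots> = (\<Sum>la\<in>OP n. \<Sum>mu\<in>OP n. c la * M la mu * psum_part mu a)"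
      by (simp add: sum_distrib_left mult.assoc)
    also have "\<dots> = (\<Sum>mu\<in>OP n. \<Sum>la\<in>OP n. c la * M la mu * psum_part mu a)"
      by (rule sum.swap)
    also have "\<dots> = lincomb (\<lambda>mu. \<Sum>la\<in>OP n. c la * M la mu) psum_part (OP n) a"
      by (simp add: lincomb_def sum_distrib_right)
    finally show "lincomb c b (OP n) a = lincomb (\<lambda>mu. \<Sum>la\<in>OP n. c la * M la mu) psum_part (OP n) a" .
  qed
  have indep: "\<forall>c. lincomb c b (OP n) = (\<lambda>_. 0) \<longrightarrow> (\<forall>la\<in>OP n. c la = 0)"
  proof (intro allI impI)
    fix c assume z: "lincomb c b (OP n) = (\<lambda>_. 0)"
    have col: "\<forall>mu\<in>OP n. (\<Sum>la\<in>OP n. c la * M la mu) = 0"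
    proof -
      have "lincomb (\<lambda>mu. \<Sum>la\<in>OP n. c la * M la mu) psum_part (OP n) = (\<lambda>_. 0)"
        using z conv[of c] by simp
      from psum_indep[OF fin parts this] show ?thesis .
    qed
    show "\<forall>la\<in>OP n. c la = 0"
    proof (rule ccontr)
      assume "\<not> (\<forall>la\<in>OP n. c la = 0)"
      then have ne: "{la\<in>OP n. c la \<noteq> 0} \<noteq> {}" by auto
      have fin': "finite {la\<in>OP n. c la \<noteq> 0}" using fin by auto
      define s where "s = Min (size ` {la\<in>OP n. c la \<noteq> 0})"
      have "s \<in> size ` {la\<in>OP n. c la \<noteq> 0}" unfolding s_def using fin' ne by (intro Min_in) auto
      then obtain la0 where la0: "la0 \<in> OP n" "c la0 \<noteq> 0" and sl0: "size la0 = s" by auto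
      have mn: "\<forall>la\<in>OP n. c la \<noteq> 0 \<longrightarrow> size la0 \<le> size la"
        unfolding sl0 s_def using fin' by (simp add: Min_le)
      have "(\<Sum>la\<in>OP n. c la * M la la0) = c la0 * M la0 la0"
      proof (rule sum.remove[OF fin la0(1), THEN trans])
        have "(\<Sum>la\<in>OP n - {la0}. c la * M la la0) = 0"
        proof (rule sum.neutral, rule ballI)
          fix la assume la: "la \<in> OP n - {la0}"
          show "c la * M la la0 = 0"
          proof (rule ccontr)
            assume "c la * M la la0 \<noteq> 0"
            then have "c la \<noteq> 0" "M la la0 \<noteq> 0" by auto
            then have "size la < size la0" using M la la0 by auto
            moreover have "size la0 \<le> size la" using mn la \<open>c la \<noteq> 0\<close> by auto
            ultimately show False by simp
          qed
        qed
        then show "c la0 * M la0 la0 + (\<Sum>la\<in>OP n - {la0}. c la * M la la0) = c la0 * M la0 la0" by simp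
      qed
      then have "c la0 * M la0 la0 = 0" using col la0 by simp
      then show False using la0 M by auto
    qed
  qed
  have sub1: "{f. \<exists>c. f = lincomb c b (OP n)} \<subseteq> Gamma n"
    unfolding Gamma_def using conv by blast
  have pspan: "psum_part mu \<in> Span n b" if "mu \<in> OP n" for mu
  proof -
    have "\<forall>mu. mu \<in> OP n \<longrightarrow> n - size mu = k \<longrightarrow> psum_part mu \<in> Span n b" for k
    proof (induction k rule: less_induct)
      case (less k)
      show ?case
      proof (intro allI impI)
        fix mu assume mu: "mu \<in> OP n" and k: "n - size mu = k"
        have szn: "size nu \<le> n" if "nu \<in> OP n" for nu
          using size_le_sum[of nu] that by (auto simp: OP_def)
        let ?I = "{nu\<in>OP n - {mu}. M mu nu \<noteq> 0}"
        have finI: "finite ?I" using fin by auto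
        have Isp: "\<forall>nu\<in>?I. psum_part nu \<in> Span n b"
        proof
          fix nu assume nu: "nu \<in> ?I"
          then have "size mu < size nu" using M mu by auto
          moreover have "size nu \<le> n" using nu szn by auto
          ultimately have "n - size nu < k" using k by simp
          then show "psum_part nu \<in> Span n b" using less nu by auto
        qed
        have bm: "b mu = (\<lambda>a. M mu mu * psum_part mu a + lincomb (M mu) psum_part ?I a)"
        proof
          fix a
          have "b mu a = (\<Sum>nu\<in>OP n. M mu nu * psum_part nu a)" using M mu by (simp add: lincomb_def)
          also have "\<dots> = M mu mu * psum_part mu a + (\<Sum>nu\<in>OP n - {mu}. M mu nu * psum_part nu a)"
            using fin mu by (simp add: sum.remove)
          also have "(\<Sum>nu\<in>OP n - {mu}. M mu nu * psum_part nu a) = (\<Sum>nu\<in>?I. M mu nu * psum_part nu a)"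
            using fin by (intro sum.mono_neutral_right) auto
          finally show "b mu a = M mu mu * psum_part mu a + lincomb (M mu) psum_part ?I a"
            by (simp add: lincomb_def)
        qed
        have Mmm: "M mu mu \<noteq> 0" using M mu by auto
        have peq: "psum_part mu = (\<lambda>a. (1 / M mu mu) * b mu a + (- 1 / M mu mu) * lincomb (M mu) psum_part ?I a)"
        proof
          fix a
          have "b mu a = M mu mu * psum_part mu a + lincomb (M mu) psum_part ?I a" using bm by (rule fun_cong)
          then show "psum_part mu a = (1 / M mu mu) * b mu a + (- 1 / M mu mu) * lincomb (M mu) psum_part ?I a"
            using Mmm by (simp add: field_simps)
        qed
        have s1: "(\<lambda>a. (1 / M mu mu) * b mu a) \<in> Span n b" using span_basis[OF mu] by (rule span_scale)
        have s2: "(\<lambda>a. (- 1 / M mu mu) * lincomb (M mu) psum_part ?I a) \<in> Span n b"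
          using span_lincomb[OF finI Isp] by (rule span_scale)
        show "psum_part mu \<in> Span n b" unfolding peq by (rule span_add[OF s1 s2])
      qed
    qed
    then show ?thesis using that by blast
  qed
  have sub2: "Gamma n \<subseteq> {f. \<exists>c. f = lincomb c b (OP n)}"
  proof
    fix f assume "f \<in> Gamma n"
    then obtain c where "f = lincomb c psum_part (OP n)" by (auto simp: Gamma_def)
    moreover have "lincomb c psum_part (OP n) \<in> Span n b" using fin pspan by (intro span_lincomb) auto
    ultimately show "f \<in> {f. \<exists>c. f = lincomb c b (OP n)}" by (simp add: Span_def)
  qed
  show ?thesis unfolding is_basis_of_Gamma_def using indep sub1 sub2 by blast
qed

lemma Yfam_Exp:
  assumes "\<forall>r. odd r \<longrightarrow> Exp (Ysf (B r)) {#r#}" and la: "la \<in> OP n"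
  shows "Exp (Yfam B la) la"
proof -
  have "\<forall>r\<in>set (sorted_list_of_multiset la). Exp (Ysf (B r)) {#r#}"
    using assms la by (auto simp: OP_def)
  from Exp_prod_list[OF this] show ?thesis by (simp add: Yfam_def)
qed

theorem mainTheorem6:
  fixes n :: nat
  assumes "n \<ge> 1"
  shows "is_basis_of_Gamma n (Yfam B1) \<and> is_basis_of_Gamma n (Yfam B2)"
proof
  have "\<forall>r. odd r \<longrightarrow> Exp (Ysf (B1 r)) {#r#}"
  proof (intro allI impI)
    fix r :: nat assume r: "odd r"
    show "Exp (Ysf (B1 r)) {#r#}"
    proof (cases "r = 3")
      case True then show ?thesis by (simp add: B1_def Y_C3)
    next
      case False then show ?thesis using r by (simp add: B1_def Y_star)
    qed
  qed
  then show "is_basis_of_Gamma n (Yfam B1)" by (intro basis_from_Exp ballI Yfam_Exp)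
next
  have "\<forall>r. odd r \<longrightarrow> Exp (Ysf (B2 r)) {#r#}" by (simp add: B2_def Y_star)
  then show "is_basis_of_Gamma n (Yfam B2)" by (intro basis_from_Exp ballI Yfam_Exp)
qed

end
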